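(* Let $n\geq 3$ and let $L\cong\mathbf{2}^n$ be a Boolean lattice. Then $\operatorname{sdim}_M\bigl(G^c(L)\bigr)=2^n-2^{n-1}-1$.
   Context: For a bounded lattice $M$ with $0$, $Z^*(M)=\{a\in M\setminus\{0\}:\ a\wedge b=0 \text{ for some } b\neq 0\}$. The graph $G^c(M)$ has vertex set $Z^*(M)$, two distinct vertices $a,b$ adjacent iff $a\wedge b\neq 0$. For a connected graph $G$, a vertex $w$ strongly resolves $u,v$ if some shortest $u$–$w$ path contains $v$ or some shortest $v$–$w$ path contains $u$; a set $W$ is a strong resolving set if every pair of distinct vertices is strongly resolved by some vertex of $W$; $\operatorname{sdim}_M(G)$ is the minimum size of a strong resolving set. *)

theory Defs
  imports Main
begin

text \<open>A walk is a nonempty list of vertices in V with consecutive entries adjacent;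
  its length is the number of edges, i.e. length minus one.\<close>

definition walk :: "'v set \<Rightarrow> ('v \<Rightarrow> 'v \<Rightarrow> bool) \<Rightarrow> 'v list \<Rightarrow> bool" where
  "walk V E xs \<longleftrightarrow> xs \<noteq> [] \<and> set xs \<subseteq> V \<and>
     (\<forall>i. Suc i < length xs \<longrightarrow> E (xs ! i) (xs ! Suc i))"

definition gdist :: "'v set \<Rightarrow> ('v \<Rightarrow> 'v \<Rightarrow> bool) \<Rightarrow> 'v \<Rightarrow> 'v \<Rightarrow> nat" where
  "gdist V E u v = (LEAST k. \<exists>xs. walk V E xs \<and> hd xs = u \<and> last xs = v \<and> length xs = Suc k)"

definition on_geodesic :: "'v set \<Rightarrow> ('v \<Rightarrow> 'v \<Rightarrow> bool) \<Rightarrow> 'v \<Rightarrow> 'v \<Rightarrow> 'v \<Rightarrow> bool" where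
  "on_geodesic V E u w x \<longleftrightarrow> (\<exists>xs. walk V E xs \<and> hd xs = u \<and> last xs = w \<and>
      length xs = Suc (gdist V E u w) \<and> x \<in> set xs)"

definition strongly_resolves :: "'v set \<Rightarrow> ('v \<Rightarrow> 'v \<Rightarrow> bool) \<Rightarrow> 'v \<Rightarrow> 'v \<Rightarrow> 'v \<Rightarrow> bool" where
  "strongly_resolves V E w u v \<longleftrightarrow> on_geodesic V E u w v \<or> on_geodesic V E v w u"

definition strong_resolving_set :: "'v set \<Rightarrow> ('v \<Rightarrow> 'v \<Rightarrow> bool) \<Rightarrow> 'v set \<Rightarrow> bool" where
  "strong_resolving_set V E W \<longleftrightarrow> W \<subseteq> V \<and>
     (\<forall>u\<in>V. \<forall>v\<in>V. u \<noteq> v \<longrightarrow> (\<exists>w\<in>W. strongly_resolves V E w u v))"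

definition sdim :: "'v set \<Rightarrow> ('v \<Rightarrow> 'v \<Rightarrow> bool) \<Rightarrow> nat" where
  "sdim V E = (LEAST k. \<exists>W. strong_resolving_set V E W \<and> finite W \<and> card W = k)"

text \<open>Zero-divisor set Z*(M) and the graph G^c(M) of a bounded lattice M (the whole type).\<close>
definition Zstar :: "'a::bounded_lattice set" where
  "Zstar = {a. a \<noteq> bot \<and> (\<exists>b. b \<noteq> bot \<and> inf a b = bot)}"

definition Gc_adj :: "'a::bounded_lattice \<Rightarrow> 'a \<Rightarrow> bool" where
  "Gc_adj a b \<longleftrightarrow> a \<noteq> b \<and> inf a b \<noteq> bot"

end

theory Submission
  imports Defs
begin

lemma walk_take: "walk V E xs \<Longrightarrow> i < length xs \<Longrightarrow> walk V E (take (Suc i) xs)"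
  unfolding walk_def by (auto dest: in_set_takeD)

lemma walk_drop: "walk V E xs \<Longrightarrow> i < length xs \<Longrightarrow> walk V E (drop i xs)"
  unfolding walk_def by (auto dest: in_set_dropD)

lemma gdist_le: "walk V E xs \<Longrightarrow> hd xs = u \<Longrightarrow> last xs = v \<Longrightarrow> gdist V E u v \<le> length xs - 1"
  unfolding gdist_def
proof (rule Least_le)
  assume a: "walk V E xs" "hd xs = u" "last xs = v"
  hence "length xs = Suc (length xs - 1)" unfolding walk_def by (cases xs) auto
  with a show "\<exists>ys. walk V E ys \<and> hd ys = u \<and> last ys = v \<and> length ys = Suc (length xs - 1)" by blast
qed

lemma gdist_geo: "walk V E ys \<Longrightarrow> hd ys = u \<Longrightarrow> last ys = v \<Longrightarrow>
   \<exists>xs. walk V E xs \<and> hd xs = u \<and> last xs = v \<and> length xs = Suc (gdist V E u v)"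
  unfolding gdist_def
proof (rule LeastI_ex)
  assume a: "walk V E ys" "hd ys = u" "last ys = v"
  hence "length ys = Suc (length ys - 1)" unfolding walk_def by (cases ys) auto
  with a show "\<exists>k xs. walk V E xs \<and> hd xs = u \<and> last xs = v \<and> length xs = Suc k" by blast
qed

lemma walk_len_ge3:
  assumes "walk V E xs" "hd xs = u" "last xs = v" "u \<noteq> v" "\<not> E u v"
  shows "length xs \<ge> 3"
proof (rule ccontr)
  assume "\<not> ?thesis"
  moreover have "length xs > 0" using assms(1) unfolding walk_def by auto
  ultimately have "length xs = 1 \<or> length xs = 2" by linarith
  thus False
  proof
    assume "length xs = 1" then obtain a where "xs = [a]" by (cases xs) auto
    thus False using assms by auto
  next
    assume "length xs = 2" then obtain a b where xs: "xs = [a,b]"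
      by (cases xs; cases "tl xs") auto
    have "E (xs!0) (xs!Suc 0)" using assms(1) xs unfolding walk_def by auto
    thus False using assms xs by auto
  qed
qed

lemma geodesic_split:
  assumes "on_geodesic V E u w v"
  shows "gdist V E u v + gdist V E v w \<le> gdist V E u w"
proof -
  obtain xs where xs: "walk V E xs" "hd xs = u" "last xs = w" "length xs = Suc (gdist V E u w)" "v \<in> set xs"
    using assms unfolding on_geodesic_def by blast
  obtain i where i: "i < length xs" "xs ! i = v" using xs(5) by (metis in_set_conv_nth)
  have ne: "xs \<noteq> []" using xs by auto
  have "gdist V E u v \<le> length (take (Suc i) xs) - 1"
    apply (rule gdist_le[OF walk_take[OF xs(1) i(1)]])
    using xs i ne by (auto simp: last_conv_nth)
  moreover have "gdist V E v w \<le> length (drop i xs) - 1"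
    apply (rule gdist_le[OF walk_drop[OF xs(1) i(1)]])
    using xs i ne by (auto simp: hd_drop_conv_nth last_drop)
  ultimately show ?thesis using i xs by auto
qed

lemma gdist_zero: "walk V E ys \<Longrightarrow> hd ys = u \<Longrightarrow> last ys = v \<Longrightarrow> gdist V E u v = 0 \<Longrightarrow> u = v"
  using gdist_geo[of V E ys u v] by (auto simp: length_Suc_conv)

lemma gdist_ge2: "walk V E ys \<Longrightarrow> hd ys = u \<Longrightarrow> last ys = v \<Longrightarrow> u \<noteq> v \<Longrightarrow> \<not> E u v \<Longrightarrow> gdist V E u v \<ge> 2"
  using gdist_geo[of V E ys u v] walk_len_ge3[of V E _ u v] by fastforce

lemma walk1: "u \<in> V \<Longrightarrow> walk V E [u]" by (auto simp: walk_def)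
lemma walk2: "u \<in> V \<Longrightarrow> v \<in> V \<Longrightarrow> E u v \<Longrightarrow> walk V E [u,v]"
  by (auto simp: walk_def less_Suc_eq)
lemma walk3: "u \<in> V \<Longrightarrow> v \<in> V \<Longrightarrow> w \<in> V \<Longrightarrow> E u v \<Longrightarrow> E v w \<Longrightarrow> walk V E [u,v,w]"
  by (auto simp: walk_def less_Suc_eq nth_Cons split: nat.splits)

locale diam2 =
  fixes V :: "'v set" and E
  assumes d2: "\<And>u v. u \<in> V \<Longrightarrow> v \<in> V \<Longrightarrow> u \<noteq> v \<Longrightarrow> \<not> E u v \<Longrightarrow> \<exists>x\<in>V. E u x \<and> E x v"
begin

lemma some_walk: "u \<in> V \<Longrightarrow> v \<in> V \<Longrightarrow> \<exists>xs. walk V E xs \<and> hd xs = u \<and> last xs = v \<and> length xs \<le> 3"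
proof -
  assume u: "u \<in> V" and v: "v \<in> V"
  show ?thesis
  proof (cases "u = v")
    case True thus ?thesis using walk1[OF u, of E] by (intro exI[of _ "[u]"]) simp
  next
    case ne: False
    show ?thesis
    proof (cases "E u v")
      case True thus ?thesis using walk2[OF u v, of E] by (intro exI[of _ "[u,v]"]) simp
    next
      case False
      then obtain x where x: "x \<in> V" "E u x" "E x v" using d2[OF u v ne] by blast
      thus ?thesis using walk3[OF u x(1) v x(2,3)] by (intro exI[of _ "[u,x,v]"]) simp
    qed
  qed
qed

lemma gdist_le2: "u \<in> V \<Longrightarrow> v \<in> V \<Longrightarrow> gdist V E u v \<le> 2"
  using some_walk[of u v] gdist_le[of V E _ u v] by fastforce

lemma geo_far:
  assumes "on_geodesic V E u w v" "u \<in> V" "v \<in> V" "w \<in> V" "u \<noteq> v" "\<not> E u v"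
  shows "v = w"
proof -
  have "gdist V E u v \<ge> 2" using some_walk[of u v] gdist_ge2 assms by metis
  hence "gdist V E v w = 0" using geodesic_split[OF assms(1)] gdist_le2[of u w] assms by linarith
  thus ?thesis using some_walk[of v w] gdist_zero assms by metis
qed

lemma on_geo_end: "u \<in> V \<Longrightarrow> v \<in> V \<Longrightarrow> on_geodesic V E u v v"
  unfolding on_geodesic_def using some_walk[of u v] gdist_geo[of V E _ u v]
  by (metis last_in_set walk_def)

lemma on_geo_mid:
  assumes "u \<in> V" "v \<in> V" "w \<in> V" "E u v" "E v w" "\<not> E u w" "u \<noteq> w"
  shows "on_geodesic V E u w v"
proof -
  have "gdist V E u w = 2"
    using gdist_le2[of u w] gdist_ge2[OF walk3[OF assms(1-5)], of u w] assms by simp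
  thus ?thesis unfolding on_geodesic_def using walk3[OF assms(1-5)]
    by (intro exI[of _ "[u,v,w]"]) auto
qed

theorem sdim_eq:
  assumes fin: "finite V" and W0: "W0 \<subseteq> V"
  and res: "\<And>u v. u \<in> V - W0 \<Longrightarrow> v \<in> V - W0 \<Longrightarrow> u \<noteq> v \<Longrightarrow>
     (\<exists>w\<in>W0. E u v \<and> E v w \<and> \<not> E u w \<and> u \<noteq> w) \<or> (\<exists>w\<in>W0. E v u \<and> E u w \<and> \<not> E v w \<and> v \<noteq> w)"
  and f: "\<And>u. u \<in> V \<Longrightarrow> f u \<in> V \<and> f u \<noteq> u \<and> \<not> E u (f u) \<and> f (f u) = u"
  and cardV: "card V = 2 * card W0"
  shows "sdim V E = card W0"
proof -
  have srs: "strong_resolving_set V E W0"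
    unfolding strong_resolving_set_def strongly_resolves_def
  proof (intro conjI W0 ballI impI)
    fix u v assume uv: "u \<in> V" "v \<in> V" "u \<noteq> v"
    show "\<exists>w\<in>W0. on_geodesic V E u w v \<or> on_geodesic V E v w u"
    proof (cases "v \<in> W0")
      case True thus ?thesis using on_geo_end uv by blast
    next
      case F1: False
      show ?thesis
      proof (cases "u \<in> W0")
        case True thus ?thesis using on_geo_end uv by blast
      next
        case False
        then show ?thesis using res[of u v] F1 uv W0 on_geo_mid by blast
      qed
    qed
  qed
  have lower: "card W0 \<le> card W" if "strong_resolving_set V E W" for W
  proof -
    have WV: "W \<subseteq> V" using that unfolding strong_resolving_set_def by auto
    have key: "u \<in> W \<or> f u \<in> W" if u: "u \<in> V" for u
    proof -
      obtain w where w: "w \<in> W" "on_geodesic V E u w (f u) \<or> on_geodesic V E (f u) w u"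
        using \<open>strong_resolving_set V E W\<close> f[OF u] u
        unfolding strong_resolving_set_def strongly_resolves_def by metis
      have nE: "\<not> E (f u) u" using f[OF u] f[OF conjunct1[OF f[OF u]]] by metis
      from w(2) show ?thesis
      proof
        assume "on_geodesic V E u w (f u)"
        hence "f u = w" using geo_far[of u w "f u"] f[OF u] u w WV by auto
        thus ?thesis using w by simp
      next
        assume "on_geodesic V E (f u) w u"
        hence "u = w" using geo_far[of "f u" w u] f[OF u] u w WV nE by auto
        thus ?thesis using w by simp
      qed
    qed
    have "V \<subseteq> W \<union> f ` W"
    proof
      fix u assume u: "u \<in> V"
      show "u \<in> W \<union> f ` W"
        using key[OF u] f[OF u] by (metis UnI1 UnI2 image_eqI)
    qed
    hence "card V \<le> card (W \<union> f ` W)" using fin WV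
      by (intro card_mono) (auto intro: finite_subset)
    also have "\<dots> \<le> card W + card (f ` W)" by (rule card_Un_le)
    also have "\<dots> \<le> 2 * card W" using card_image_le[of W f] fin WV finite_subset by fastforce
    finally show ?thesis using cardV by linarith
  qed
  have fW0: "finite W0" using fin W0 finite_subset by blast
  show ?thesis unfolding sdim_def
  proof (rule Least_equality)
    show "\<exists>W. strong_resolving_set V E W \<and> finite W \<and> card W = card W0" using srs fW0 by blast
  next
    fix y assume "\<exists>W. strong_resolving_set V E W \<and> finite W \<and> card W = y"
    thus "card W0 \<le> y" using lower by blast
  qed
qed
end

theorem corollary3p21:
  fixes n :: nat and \<phi> :: "nat set \<Rightarrow> 'a::bounded_lattice"
  assumes "n \<ge> 3"
    and "bij_betw \<phi> (Pow {..<n}) (UNIV :: 'a set)"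
    and "\<forall>A\<in>Pow {..<n}. \<forall>B\<in>Pow {..<n}. A \<subseteq> B \<longleftrightarrow> \<phi> A \<le> \<phi> B"
  shows "sdim (Zstar :: 'a set) Gc_adj = 2 ^ n - 2 ^ (n - 1) - 1"
proof -
  define N where "N = {..<n}"
  note bij = assms(2)[folded N_def] and ord = assms(3)[folded N_def]
  define \<psi> where "\<psi> = inv_into (Pow N) \<phi>"
  have inj: "inj_on \<phi> (Pow N)" using bij by (simp add: bij_betw_def)
  have surj: "\<phi> ` Pow N = UNIV" using bij by (simp add: bij_betw_def)
  have psiP: "\<psi> a \<subseteq> N" for a unfolding \<psi>_def using surj inv_into_into[of a \<phi> "Pow N"] by auto
  have phipsi: "\<phi> (\<psi> a) = a" for a unfolding \<psi>_def using surj f_inv_into_f[of a \<phi> "Pow N"] by auto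
  have psiphi: "A \<subseteq> N \<Longrightarrow> \<psi> (\<phi> A) = A" for A unfolding \<psi>_def using inj by auto
  have le: "a \<le> b \<longleftrightarrow> \<psi> a \<subseteq> \<psi> b" for a b :: 'a using ord[rule_format, of "\<psi> a" "\<psi> b"] psiP phipsi by simp
  have inf: "\<psi> (inf a b) = \<psi> a \<inter> \<psi> b" for a b :: 'a
  proof -
    have s: "\<psi> (\<phi> (\<psi> a \<inter> \<psi> b)) = \<psi> a \<inter> \<psi> b" using psiphi[of "\<psi> a \<inter> \<psi> b"] psiP[of a] by auto
    have "\<phi> (\<psi> a \<inter> \<psi> b) \<le> a" "\<phi> (\<psi> a \<inter> \<psi> b) \<le> b" by (simp_all add: le s)
    hence 1: "\<phi> (\<psi> a \<inter> \<psi> b) \<le> inf a b" by simp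
    have "\<psi> (inf a b) \<subseteq> \<psi> a" "\<psi> (inf a b) \<subseteq> \<psi> b" using le[of "inf a b" a] le[of "inf a b" b] by simp_all
    hence "inf a b \<le> \<phi> (\<psi> a \<inter> \<psi> b)" by (simp add: le s)
    with 1 have "inf a b = \<phi> (\<psi> a \<inter> \<psi> b)" by (rule antisym[rotated])
    thus ?thesis using s by simp
  qed
  have bot: "\<psi> (bot::'a) = {}" using le[of bot "\<phi> {}"] psiphi[of "{}"] by auto
  have psi_bot: "a = bot \<longleftrightarrow> \<psi> a = {}" for a :: 'a using bot phipsi by metis
  have psi_inj: "a = b \<longleftrightarrow> \<psi> a = \<psi> b" for a b :: 'a using phipsi by metis
  have Z: "a \<in> Zstar \<longleftrightarrow> \<psi> a \<noteq> {} \<and> \<psi> a \<noteq> N" for a :: 'a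
  proof
    assume "a \<in> Zstar"
    then obtain b where "a \<noteq> bot" "b \<noteq> bot" "inf a b = bot" unfolding Zstar_def by auto
    thus "\<psi> a \<noteq> {} \<and> \<psi> a \<noteq> N" using psi_bot inf psiP[of b] by auto
  next
    assume a: "\<psi> a \<noteq> {} \<and> \<psi> a \<noteq> N"
    hence "N - \<psi> a \<noteq> {}" using psiP[of a] by auto
    moreover have "\<psi> a \<inter> (N - \<psi> a) = {}" by auto
    ultimately show "a \<in> Zstar" unfolding Zstar_def using a psi_bot inf psiphi[of "N - \<psi> a"]
      by (auto intro!: exI[of _ "\<phi> (N - \<psi> a)"])
  qed
  have adj: "Gc_adj a b \<longleftrightarrow> a \<noteq> b \<and> \<psi> a \<inter> \<psi> b \<noteq> {}" for a b :: 'a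
    unfolding Gc_adj_def using psi_bot inf by auto
  have finN: "finite N" unfolding N_def by simp
  have finU: "finite (UNIV :: 'a set)" by (metis surj finN finite_Pow_iff finite_imageI)
  define W0 where "W0 = {a::'a. a \<in> Zstar \<and> 0 \<notin> \<psi> a}"
  have 0: "0 \<in> N" using assms(1) N_def by auto
  have memimg: "a \<in> \<phi> ` S \<longleftrightarrow> \<psi> a \<in> S" if "S \<subseteq> Pow N" for S a
  proof
    assume "a \<in> \<phi> ` S" then obtain A where "A \<in> S" "a = \<phi> A" by blast
    thus "\<psi> a \<in> S" using psiphi that by auto
  next
    assume "\<psi> a \<in> S" thus "a \<in> \<phi> ` S" using phipsi[of a] by (metis image_eqI)
  qed
  have cardZ: "card (Zstar::'a set) = card (Pow N - {{}, N})"
  proof -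
    have "Zstar = \<phi> ` (Pow N - {{}, N})"
      by (rule set_eqI, subst memimg) (auto simp: Z psiP)
    moreover have "inj_on \<phi> (Pow N - {{}, N})" using inj by (rule inj_on_subset) auto
    ultimately show ?thesis by (metis card_image)
  qed
  have cardW: "card W0 = card (Pow (N - {0}) - {{}})"
  proof -
    have "W0 = \<phi> ` (Pow (N - {0}) - {{}})" unfolding W0_def
      by (rule set_eqI, subst memimg) (use psiP 0 in \<open>auto simp: Z\<close>)
    moreover have "inj_on \<phi> (Pow (N - {0}) - {{}})" using inj by (rule inj_on_subset) auto
    ultimately show ?thesis by (metis card_image)
  qed
  have cN: "card N = n" unfolding N_def by simp
  have cE: "card {{}, N} = 2" using 0 by (subgoal_tac "N \<noteq> {}") auto
  have c1: "card (Pow N - {{}, N}) = 2 ^ n - 2"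
    using finN cN 0 cE by (subst card_Diff_subset) (auto simp: card_Pow)
  have c2: "card (Pow (N - {0}) - {{}}) = 2 ^ (n - 1) - 1"
    using finN cN 0 by (subst card_Diff_subset) (auto simp: card_Pow)
  interpret diam2 "Zstar :: 'a set" Gc_adj
  proof
    fix u v :: 'a assume uv: "u \<in> Zstar" "v \<in> Zstar" "u \<noteq> v" "\<not> Gc_adj u v"
    obtain i j where ij: "i \<in> \<psi> u" "j \<in> \<psi> v" using uv Z by blast
    have dis: "\<psi> u \<inter> \<psi> v = {}" using uv adj by auto
    hence "i \<noteq> j" using ij by auto
    have ijN: "{i,j} \<subseteq> N" using ij psiP by auto
    have "card {i,j} = 2" using \<open>i \<noteq> j\<close> by auto
    hence "{i,j} \<noteq> N" using cN assms(1) by auto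
    hence xZ: "\<phi> {i,j} \<in> Zstar" using Z psiphi[OF ijN] by auto
    have px: "\<psi> (\<phi> {i,j}) = {i,j}" by (rule psiphi[OF ijN])
    have n1: "u \<noteq> \<phi> {i,j}" using px ij dis by auto
    have n2: "\<phi> {i,j} \<noteq> v" using px ij dis by auto
    have "Gc_adj u (\<phi> {i,j})" unfolding adj px using n1 ij by auto
    moreover have "Gc_adj (\<phi> {i,j}) v" unfolding adj px using n2 ij by auto
    ultimately show "\<exists>x\<in>Zstar. Gc_adj u x \<and> Gc_adj x v" using xZ by blast
  qed
  have "sdim (Zstar :: 'a set) Gc_adj = card W0"
  proof (rule sdim_eq[where f = "\<lambda>a. \<phi> (N - \<psi> a)"])
    show "finite (Zstar :: 'a set)" by (rule finite_subset[OF subset_UNIV finU])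
    show "W0 \<subseteq> Zstar" unfolding W0_def by auto
    show "card (Zstar :: 'a set) = 2 * card W0" using cardZ cardW c1 c2 assms(1)
      by (cases n) (auto simp: algebra_simps)
  next
    fix u :: 'a assume u: "u \<in> Zstar"
    have p: "\<psi> (\<phi> (N - \<psi> u)) = N - \<psi> u" using psiphi by auto
    have "N - (N - \<psi> u) = \<psi> u" using psiP[of u] by auto
    thus "\<phi> (N - \<psi> u) \<in> Zstar \<and> \<phi> (N - \<psi> u) \<noteq> u \<and> \<not> Gc_adj u (\<phi> (N - \<psi> u)) \<and>
          \<phi> (N - \<psi> (\<phi> (N - \<psi> u))) = u"
      using u Z p psiP[of u] adj phipsi by (auto simp: psi_inj[of _ u])
  next
    fix u v :: 'a assume u: "u \<in> Zstar - W0" and v: "v \<in> Zstar - W0" and uv: "u \<noteq> v"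
    have u0: "0 \<in> \<psi> u" and v0: "0 \<in> \<psi> v" using u v unfolding W0_def by auto
    have single: "y \<in> N \<Longrightarrow> y \<noteq> 0 \<Longrightarrow> \<phi> {y} \<in> W0 \<and> \<psi> (\<phi> {y}) = {y}" for y
      unfolding W0_def using Z psiphi[of "{y}"] 0 by auto
    have "\<psi> u \<noteq> \<psi> v" using uv psi_inj by auto
    hence "(\<exists>y. y \<in> \<psi> v - \<psi> u) \<or> (\<exists>y. y \<in> \<psi> u - \<psi> v)" by blast
    thus "(\<exists>w\<in>W0. Gc_adj u v \<and> Gc_adj v w \<and> \<not> Gc_adj u w \<and> u \<noteq> w) \<or>
          (\<exists>w\<in>W0. Gc_adj v u \<and> Gc_adj u w \<and> \<not> Gc_adj v w \<and> v \<noteq> w)"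
    proof
      assume "\<exists>y. y \<in> \<psi> v - \<psi> u"
      then obtain y where y: "y \<in> \<psi> v" "y \<notin> \<psi> u" by blast
      have yN: "y \<in> N" "y \<noteq> 0" using y(1) psiP[of v] apply blast using y(2) u0 by (metis)
      show ?thesis using single[OF yN] y u0 v0 uv adj by (intro disjI1 bexI[of _ "\<phi> {y}"]) auto
    next
      assume "\<exists>y. y \<in> \<psi> u - \<psi> v"
      then obtain y where y: "y \<in> \<psi> u" "y \<notin> \<psi> v" by blast
      have yN: "y \<in> N" "y \<noteq> 0" using y(1) psiP[of u] apply blast using y(2) v0 by metis
      show ?thesis using single[OF yN] y u0 v0 uv adj by (intro disjI2 bexI[of _ "\<phi> {y}"]) auto
    qed
  qed
  thus ?thesis using cardW c2 assms(1)
    by (cases n) (auto simp: algebra_simps)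
qed
end
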